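(* Let $(\mathcal{X},d)$ be a finite metric space, $P$ a probability distribution on $\mathcal{X}$, and $k\ge 1$ an integer. Let $O\in\mathcal{X}_k$ be an optimal solution of the $k$-RP instance, i.e., $O$ minimizes $\mathbb{E}_{X\sim P_k}[d_k(O,X)]$ over $\mathcal{X}_k$. If $S$ is a random $k$-multiset obtained by drawing $k$ points of $\mathcal{X}$ i.i.d. according to $P$ (i.e., $S\sim P_k$), then $$\mathbb{E}_{S\sim P_k}\mathbb{E}_{X\sim P_k}[d_k(S,X)]\le 2\cdot \mathbb{E}_{X\sim P_k}[d_k(O,X)].$$
   Context: $\mathcal{X}_k$ denotes the set of all multisets of exactly $k$ points of $\mathcal{X}$. For $U,V\in\mathcal{X}_k$, $d_k(U,V)$ is the minimum, over all perfect matchings between the $k$ elements of $U$ and the $k$ elements of $V$ (counted with multiplicity), of the sum of $d(u,v)$ over matched pairs $(u,v)$. $P_k$ is the distribution on $\mathcal{X}_k$ of the multiset of $k$ points drawn i.i.d. from $P$. The $k$-RP (robotaxi placement) problem asks for $S\in\mathcal{X}_k$ minimizing its cost $\mathbb{E}_{X\sim P_k}[d_k(S,X)]$. *)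

theory Defs
  imports "HOL-Analysis.Analysis" "HOL-Probability.Probability" "HOL-Library.Multiset"
begin

text \<open>Matching distance d_k between two multisets of the same size: minimum over
  all perfect matchings (realised as pairings of enumerations of the two multisets)
  of the sum of distances of matched pairs.\<close>
definition dk :: "'a::metric_space multiset \<Rightarrow> 'a multiset \<Rightarrow> real" where
  "dk U V = Min {sum_list (map (\<lambda>(u,v). dist u v) (zip us vs)) | us vs.
                   mset us = U \<and> mset vs = V}"

fun Pk :: "nat \<Rightarrow> 'a pmf \<Rightarrow> 'a multiset pmf" where
  "Pk 0 P = return_pmf {#}"
| "Pk (Suc k) P = bind_pmf P (\<lambda>x. map_pmf (add_mset x) (Pk k P))"

definition rp_cost :: "nat \<Rightarrow> 'a::metric_space pmf \<Rightarrow> 'a multiset \<Rightarrow> real" where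
  "rp_cost k P S = measure_pmf.expectation (Pk k P) (\<lambda>X. dk S X)"

end

theory Submission
  imports Defs "HOL-Combinatorics.Permutations"
begin

definition cst :: "'a::metric_space list \<Rightarrow> 'a list \<Rightarrow> real" where
  "cst us vs = sum_list (map (\<lambda>(u,v). dist u v) (zip us vs))"

lemma dk_alt: "dk U V = Min {cst us vs | us vs. mset us = U \<and> mset vs = V}"
  unfolding dk_def cst_def by simp

lemma dk_set_fin: "finite {cst us vs | us vs. mset us = U \<and> mset vs = (V::'a::metric_space multiset)}"
proof -
  obtain us0 where u0: "mset us0 = U" using ex_mset by blast
  obtain vs0 where v0: "mset vs0 = V" using ex_mset by blast
  have "{cst us vs | us vs. mset us = U \<and> mset vs = V}
        = (\<lambda>(us,vs). cst us vs) ` ({us. mset us = mset us0} \<times> {vs. mset vs = mset vs0})"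
    using u0 v0 by auto
  then show ?thesis using mset_eq_finite by (metis finite_SigmaI finite_imageI)
qed

lemma dk_set_ne: "{cst us vs | us vs. mset us = U \<and> mset vs = (V::'a::metric_space multiset)} \<noteq> {}"
proof -
  obtain us0 where u0: "mset us0 = U" using ex_mset by blast
  obtain vs0 where v0: "mset vs0 = V" using ex_mset by blast
  show ?thesis using u0 v0 by blast
qed

lemma dk_le: "mset us = U \<Longrightarrow> mset vs = V \<Longrightarrow> dk U V \<le> cst us vs"
  unfolding dk_alt by (rule Min_le[OF dk_set_fin]) blast

lemma dk_obt: obtains us vs where "mset us = U" "mset vs = V" "dk U V = cst us vs"
proof -
  have "dk U V \<in> {cst us vs | us vs. mset us = U \<and> mset vs = V}"
    unfolding dk_alt by (rule Min_in[OF dk_set_fin dk_set_ne])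
  then show ?thesis using that by blast
qed

lemma cst_sym: "cst us vs = cst vs us"
proof -
  have "map (\<lambda>(u,v). dist u v) (zip us vs) = map (\<lambda>(u,v). dist u v) (zip vs us)"
    by (subst zip_commute) (simp add: dist_commute case_prod_beta)
  then show ?thesis unfolding cst_def by simp
qed

lemma dk_sym: "dk U V = dk V U"
proof -
  have "{cst us vs | us vs. mset us = U \<and> mset vs = V} = {cst us vs | us vs. mset us = V \<and> mset vs = U}"
    using cst_sym by blast
  then show ?thesis unfolding dk_alt by simp
qed

lemma cst_nth: "length us = length vs \<Longrightarrow> cst us vs = (\<Sum>i<length us. dist (us!i) (vs!i))"
  unfolding cst_def by (simp add: sum_list_sum_nth atLeast0LessThan)

lemma dk_tri:
  assumes "size U = size M" "size M = size X"
  shows "dk U X \<le> dk U M + dk M X"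
proof -
  obtain us os where h1: "mset us = U" "mset os = M" "dk U M = cst us os" by (rule dk_obt)
  obtain os' xs where h2: "mset os' = M" "mset xs = X" "dk M X = cst os' xs" by (rule dk_obt)
  have len: "length us = length os" "length os' = length os" "length xs = length os"
    using h1 h2 assms by (metis size_mset)+
  obtain p where p: "p permutes {..<length os'}" "permute_list p os' = os"
    using mset_eq_permutation[of os os'] h1 h2 by metis
  define xs2 where "xs2 = permute_list p xs"
  have mx2: "mset xs2 = X" using p h2 len unfolding xs2_def by simp
  have lx2: "length xs2 = length os" using len unfolding xs2_def by simp
  have "zip os xs2 = permute_list p (zip os' xs)"
    using permute_list_zip[OF p(1) refl, of xs] len p unfolding xs2_def by simp
  then have "mset (zip os xs2) = mset (zip os' xs)"
    using p len by simp
  then have "mset (map (\<lambda>(u,v). dist u v) (zip os xs2)) = mset (map (\<lambda>(u,v). dist u v) (zip os' xs))"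
    by simp
  then have c2: "cst os xs2 = cst os' xs" unfolding cst_def by (metis sum_mset_sum_list)
  have "dk U X \<le> cst us xs2" using dk_le h1 mx2 by blast
  also have "\<dots> = (\<Sum>i<length us. dist (us!i) (xs2!i))" by (rule cst_nth) (simp add: len lx2)
  also have "\<dots> \<le> (\<Sum>i<length us. dist (us!i) (os!i) + dist (os!i) (xs2!i))"
    by (rule sum_mono) (rule dist_triangle)
  also have "\<dots> = cst us os + cst os xs2"
    using cst_nth[of us os] cst_nth[of os xs2] len lx2 by (simp add: sum.distrib)
  finally show ?thesis using h1 h2 c2 by simp
qed

lemma Pk_size: "S \<in> set_pmf (Pk k P) \<Longrightarrow> size S = k"
  by (induction k arbitrary: S) auto

lemma Pk_fin: "finite (set_pmf (Pk k (P::'a::finite pmf)))"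
  by (induction k) auto

theorem theorem1:
  fixes P :: "'a::{metric_space, finite} pmf" and k :: nat and Opt :: "'a multiset"
  assumes "k \<ge> 1"
    and "size Opt = k"
    and "\<forall>S. size S = k \<longrightarrow> rp_cost k P Opt \<le> rp_cost k P S"
  shows "measure_pmf.expectation (Pk k P) (\<lambda>S. rp_cost k P S) \<le> 2 * rp_cost k P Opt"
proof -
  have int: "integrable (measure_pmf (Pk k P)) f" for f :: "'a multiset \<Rightarrow> real"
    by (rule integrable_measure_pmf_finite[OF Pk_fin])
  have step: "rp_cost k P S \<le> dk Opt S + rp_cost k P Opt" if S: "S \<in> set_pmf (Pk k P)" for S
  proof -
    have "rp_cost k P S \<le> measure_pmf.expectation (Pk k P) (\<lambda>X. dk S Opt + dk Opt X)"
      unfolding rp_cost_def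
    proof (rule integral_mono_AE[OF int int])
      show "AE X in measure_pmf (Pk k P). dk S X \<le> dk S Opt + dk Opt X"
      proof (rule AE_pmfI)
        fix X assume X: "X \<in> set_pmf (Pk k P)"
        show "dk S X \<le> dk S Opt + dk Opt X"
          by (rule dk_tri) (use Pk_size[OF X] Pk_size[OF S] assms(2) in auto)
      qed
    qed
    also have "\<dots> = dk S Opt + rp_cost k P Opt"
      unfolding rp_cost_def by (simp add: int)
    finally show ?thesis by (simp add: dk_sym)
  qed
  have "measure_pmf.expectation (Pk k P) (\<lambda>S. rp_cost k P S)
        \<le> measure_pmf.expectation (Pk k P) (\<lambda>S. dk Opt S + rp_cost k P Opt)"
    by (rule integral_mono_AE[OF int int]) (rule AE_pmfI, rule step)
  also have "\<dots> = 2 * rp_cost k P Opt"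
    by (simp add: int rp_cost_def)
  finally show ?thesis .
qed

end
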